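(* Let $n\ge 2$ and let $G=K_{1,n}$ be a star whose edges have weights $p_1\le p_2\le\dots\le p_n$ in $(0,1)$, and let $\alpha\in(0,1)$. Put $P=\prod_{j=1}^{n-1}(1-p_j)$ and assume $P\ne 1-p_n$. Then $\operatorname{cptw}(G,\alpha)$ is the minimum positive integer $m$ such that \[p_n(1-P)\cdot\frac{\dfrac{1-P^m}{1-P}-\dfrac{1-(1-p_n)^m}{p_n}}{P-(1-p_n)}\ \ge\ \alpha.\]
   Context: Let $G$ be a finite simple graph in which each edge $uv$ has a weight $w_{uv}\in(0,1)$. Weighted zero forcing: start with a set $B\subseteq V(G)$ of blue vertices, all other vertices white. In each round, simultaneously, for every blue vertex $u$ that has exactly one white neighbor $v$ (with respect to the coloring at the start of the round), $u$ attempts to force $v$, succeeding with probability $w_{uv}$, all attempts being independent; a white vertex becomes blue at the end of the round if at least one attempt on it succeeds. $B$ is a weighted zero forcing set of $G$ if this process can eventually color all of $V(G)$ blue (equivalently, $B$ is a zero forcing set of the underlying unweighted graph under the standard rule); $\operatorname{Z}(G)$ is the minimum size of such a set. $\operatorname{ptw}(G,B)$ is the random variable giving the round in which the last white vertex becomes blue ($0$ if $B=V(G)$). For $\alpha\in(0,1)$, $\operatorname{cptw}(G,B,\alpha)$ is the least $t\ge 0$ with $\Pr(\operatorname{ptw}(G,B)\le t)\ge\alpha$, and $\operatorname{cptw}(G,\alpha)$ is the minimum of $\operatorname{cptw}(G,B,\alpha)$ over weighted zero forcing sets $B$ with $|B|=\operatorname{Z}(G)$. *)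

theory Defs
  imports "HOL-Probability.Probability"
begin

text \<open>A finite simple graph is given by a finite vertex set V and a symmetric,
irreflexive edge relation E; edge weights are given by a function w (only its
values on edges matter).\<close>

definition zf_step :: "'a set \<Rightarrow> ('a \<Rightarrow> 'a \<Rightarrow> bool) \<Rightarrow> 'a set \<Rightarrow> 'a set" where
  "zf_step V E S = S \<union> {v. \<exists>u\<in>S. {x\<in>V. E u x \<and> x \<notin> S} = {v}}"

definition zero_forcing_set :: "'a set \<Rightarrow> ('a \<Rightarrow> 'a \<Rightarrow> bool) \<Rightarrow> 'a set \<Rightarrow> bool" where
  "zero_forcing_set V E B \<longleftrightarrow> B \<subseteq> V \<and> (\<exists>k. (zf_step V E ^^ k) B = V)"

definition zero_forcing_number :: "'a set \<Rightarrow> ('a \<Rightarrow> 'a \<Rightarrow> bool) \<Rightarrow> nat" where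
  "zero_forcing_number V E = Min {card B | B. zero_forcing_set V E B}"

definition wzf_forcers :: "'a set \<Rightarrow> ('a \<Rightarrow> 'a \<Rightarrow> bool) \<Rightarrow> 'a set \<Rightarrow> 'a \<Rightarrow> 'a set" where
  "wzf_forcers V E S v = {u\<in>S. {x\<in>V. E u x \<and> x \<notin> S} = {v}}"

definition wzf_prob :: "'a set \<Rightarrow> ('a \<Rightarrow> 'a \<Rightarrow> bool) \<Rightarrow> ('a \<Rightarrow> 'a \<Rightarrow> real) \<Rightarrow> 'a set \<Rightarrow> 'a \<Rightarrow> real" where
  "wzf_prob V E w S v = 1 - (\<Prod>u\<in>wzf_forcers V E S v. 1 - w u v)"

text \<open>One round of weighted zero forcing, as a distribution on blue sets.
Different white vertices receive disjoint sets of attempts, so they turn blue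
independently.\<close>
definition wzf_step :: "'a set \<Rightarrow> ('a \<Rightarrow> 'a \<Rightarrow> bool) \<Rightarrow> ('a \<Rightarrow> 'a \<Rightarrow> real) \<Rightarrow> 'a set \<Rightarrow> 'a set pmf" where
  "wzf_step V E w S =
     map_pmf (\<lambda>f. S \<union> {v \<in> V - S. f v})
       (Pi_pmf (V - S) False (\<lambda>v. bernoulli_pmf (wzf_prob V E w S v)))"

primrec wzf_state :: "'a set \<Rightarrow> ('a \<Rightarrow> 'a \<Rightarrow> bool) \<Rightarrow> ('a \<Rightarrow> 'a \<Rightarrow> real) \<Rightarrow> 'a set \<Rightarrow> nat \<Rightarrow> 'a set pmf" where
  "wzf_state V E w B 0 = return_pmf B"
| "wzf_state V E w B (Suc t) = bind_pmf (wzf_state V E w B t) (wzf_step V E w)"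

definition ptw_le_prob :: "'a set \<Rightarrow> ('a \<Rightarrow> 'a \<Rightarrow> bool) \<Rightarrow> ('a \<Rightarrow> 'a \<Rightarrow> real) \<Rightarrow> 'a set \<Rightarrow> nat \<Rightarrow> real" where
  "ptw_le_prob V E w B t = pmf (wzf_state V E w B t) V"

definition cptw_set :: "'a set \<Rightarrow> ('a \<Rightarrow> 'a \<Rightarrow> bool) \<Rightarrow> ('a \<Rightarrow> 'a \<Rightarrow> real) \<Rightarrow> 'a set \<Rightarrow> real \<Rightarrow> nat" where
  "cptw_set V E w B \<alpha> = (LEAST t. ptw_le_prob V E w B t \<ge> \<alpha>)"

definition cptw :: "'a set \<Rightarrow> ('a \<Rightarrow> 'a \<Rightarrow> bool) \<Rightarrow> ('a \<Rightarrow> 'a \<Rightarrow> real) \<Rightarrow> real \<Rightarrow> nat" where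
  "cptw V E w \<alpha> = Min {cptw_set V E w B \<alpha> | B. zero_forcing_set V E B \<and> card B = zero_forcing_number V E}"

text \<open>The star K_{1,n}: centre 0, leaves 1..n; the edge to leaf i has weight p i.\<close>
definition star_V :: "nat \<Rightarrow> nat set" where
  "star_V n = {0..n}"

definition star_E :: "nat \<Rightarrow> nat \<Rightarrow> nat \<Rightarrow> bool" where
  "star_E n u v \<longleftrightarrow> (u = 0 \<and> v \<in> {1..n}) \<or> (v = 0 \<and> u \<in> {1..n})"

definition star_w :: "(nat \<Rightarrow> real) \<Rightarrow> nat \<Rightarrow> nat \<Rightarrow> real" where
  "star_w p u v = p (max u v)"

end

theory Submission
  imports Defs
begin


fun hh :: "real \<Rightarrow> real \<Rightarrow> nat \<Rightarrow> real" where
  "hh x y 0 = 1" | "hh x y (Suc j) = x^(Suc j) + y * hh x y j"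
fun uu :: "real \<Rightarrow> real \<Rightarrow> nat \<Rightarrow> real" where
  "uu x y 0 = 0" | "uu x y (Suc t) = (1-x)*x^t + y * uu x y t"
definition GG :: "real \<Rightarrow> real \<Rightarrow> nat \<Rightarrow> real" where
  "GG x y t = x^t + uu x y t"

lemma hh_closed: "(x-y)*hh x y j = x^(Suc j) - y^(Suc j)"
proof (induction j)
  case (Suc j)
  have "(x-y)*hh x y (Suc j) = (x-y)*x^(Suc j) + y*((x-y)*hh x y j)" by (simp add: algebra_simps)
  also have "\<dots> = (x-y)*x^(Suc j) + y*(x^(Suc j) - y^(Suc j))" using Suc by simp
  finally show ?case by (simp add: algebra_simps)
qed simp

lemma hh_sym: "hh x y j = hh y x j"
proof (cases "x = y")
  case False
  have "(x-y)*hh x y j = (x-y)*hh y x j"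
    using hh_closed[of x y j] hh_closed[of y x j] by (simp add: algebra_simps)
  then show ?thesis using False by simp
qed simp

lemma hh_rec2: "hh x y (Suc (Suc j)) = x^(j+2) + y^(j+2) + x*y*hh x y j"
proof -
  have "x^(Suc j) + y * hh x y j = y^(Suc j) + x * hh x y j"
    using hh_sym[of x y "Suc j"] hh_sym[of x y j] by simp
  then have "hh x y (Suc (Suc j)) = x^(j+2) + y*(y^(Suc j) + x * hh x y j)"
    by simp
  then show ?thesis by (simp add: algebra_simps)
qed

lemma uu_hh: "uu x y (Suc t) = (1-x)*hh x y t"
proof (induction t)
  case (Suc t)
  have "uu x y (Suc (Suc t)) = (1-x)*x^(Suc t) + y*uu x y (Suc t)" by simp
  also have "\<dots> = (1-x)*x^(Suc t) + y*((1-x)*hh x y t)" using Suc by simp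
  finally show ?case by (simp add: algebra_simps)
qed simp

lemma GG_rec: "GG x y (Suc (Suc t)) = hh x y (Suc t) - x*y*hh x y t"
  unfolding GG_def uu_hh by (simp add: algebra_simps)

lemma GG_sym: "GG x y t = GG y x t"
proof (cases t)
  case 0 then show ?thesis by (simp add: GG_def)
next
  case (Suc t') then show ?thesis
  proof (cases t')
    case 0 then show ?thesis using Suc by (simp add: GG_def)
  next
    case (Suc t'') then show ?thesis using \<open>t = Suc t'\<close> by (simp add: GG_rec hh_sym)
  qed
qed

lemma D_step:
  fixes a b c d :: real
  assumes "0<b" "b\<le>d" "d\<le>c" "c\<le>a" "a*b=c*d"
  shows "d * (a^k + b^k - c^k - d^k) \<le> a^(Suc k) + b^(Suc k) - c^(Suc k) - d^(Suc k)"
proof -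
  have e: "a^(Suc k) + b^(Suc k) - c^(Suc k) - d^(Suc k) - d * (a^k + b^k - c^k - d^k)
     = a^k*(a-d) - b^k*(d-b) - c^k*(c-d)" by (simp add: algebra_simps)
  have 1: "a^k*(a-d) \<ge> c^k*(a-d)"
    using assms by (intro mult_right_mono power_mono) auto
  have 2: "d*(a-c) = a*(d-b)" using assms by (simp add: algebra_simps)
  have 3: "c^k * a \<ge> b^k * d"
    using assms by (intro mult_mono power_mono) auto
  have "d * (c^k*(a-c)) = (c^k*a)*(d-b)" using 2 by (simp add: algebra_simps)
  also have "\<dots> \<ge> (b^k*d)*(d-b)" using 3 assms by (intro mult_right_mono) auto
  finally have "d * (c^k*(a-c)) \<ge> d * (b^k*(d-b))" by (simp add: algebra_simps)
  then have 4: "c^k*(a-c) \<ge> b^k*(d-b)" using assms by (simp add: mult_le_cancel_left)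
  have "a^k*(a-d) - b^k*(d-b) - c^k*(c-d) \<ge> 0"
    using 1 4 by (simp add: algebra_simps)
  then show ?thesis using e by linarith
qed

lemma GG_mono:
  fixes a b c d :: real
  assumes "0<b" "b\<le>d" "d\<le>c" "c\<le>a" "a<1" "a*b=c*d"
  shows "GG c d t \<le> GG a b t"
proof -
  define D where "D k = a^k + b^k - c^k - d^k" for k
  define E where "E j = hh a b j - hh c d j" for j
  define R where "R = c*d"
  have Ds: "d * D k \<le> D (Suc k)" for k unfolding D_def using D_step[OF assms(1-4) assms(6)] .
  have Dnn: "D k \<ge> 0" for k
  proof (induction k)
    case 0 then show ?case by (simp add: D_def)
  next
    case (Suc k) then show ?case using Ds[of k] assms by (smt (verit) mult_nonneg_nonneg)
  qed
  have Rd: "0 \<le> R" "R \<le> d" using assms unfolding R_def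
    by (auto intro: mult_left_le_one_le)
  have DR: "R * D k \<le> D (Suc k)" for k
    using Ds[of k] Dnn[of k] Rd by (meson dual_order.trans mult_right_mono)
  have E0: "E 0 = 0" by (simp add: E_def)
  have E1: "E 1 = D 1" by (simp add: E_def D_def)
  have E2: "E (Suc (Suc j)) = D (j+2) + R * E j" for j
    unfolding E_def D_def R_def hh_rec2 using assms(6) by (simp add: algebra_simps)
  have key: "R * E j \<le> E (Suc j) \<and> R * E (Suc j) \<le> E (Suc (Suc j))" for j
  proof (induction j)
    case 0
    have "R * E 0 \<le> E 1" using E0 E1 Dnn[of 1] by simp
    moreover have "R * E 1 \<le> E 2" using E2[of 0] E0 E1 DR[of 1] by (simp add: numeral_2_eq_2)
    ultimately show ?case by (simp add: numeral_2_eq_2)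
  next
    case (Suc j)
    have "E (Suc (Suc (Suc j))) - R * E (Suc (Suc j)) = (D (j+3) - R * D (j+2)) + R * (E (Suc j) - R * E j)"
      using E2[of "Suc j"] E2[of j] by (simp add: algebra_simps eval_nat_numeral)
    moreover have "D (j+3) - R * D (j+2) \<ge> 0" using DR[of "j+2"] by (simp add: eval_nat_numeral)
    moreover have "R * (E (Suc j) - R * E j) \<ge> 0" using Suc.IH Rd by simp
    ultimately show ?case using Suc.IH by linarith
  qed
  show ?thesis
  proof (cases t)
    case 0 then show ?thesis by (simp add: GG_def)
  next
    case (Suc t') then show ?thesis
    proof (cases t')
      case 0 then show ?thesis using Suc by (simp add: GG_def)
    next
      case (Suc s)
      have "GG a b t - GG c d t = E (Suc s) - R * E s"
        using \<open>t = Suc t'\<close> Suc assms(6) by (simp only: GG_rec E_def R_def) (simp add: algebra_simps)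
      then show ?thesis using key[of s] by simp
    qed
  qed
qed

lemma uu_closed: "(x-y)*uu x y m = (1-x)*(x^m - y^m)"
proof (cases m)
  case (Suc m')
  have "(x-y)*uu x y (Suc m') = (1-x)*((x-y)*hh x y m')" by (simp only: uu_hh) (simp add: algebra_simps)
  then show ?thesis using hh_closed[of x y m'] Suc by simp
qed simp

lemma GG_formula:
  fixes P q :: real
  assumes "0 < q" "P < 1" "P \<noteq> 1 - q"
  shows "1 - GG P (1-q) m = q*(1-P)*(((1-P^m)/(1-P) - (1-(1-q)^m)/q)/(P-(1-q)))"
proof -
  have u: "uu P (1-q) m = (1-P)*(P^m - (1-q)^m) / (P-(1-q))"
    using uu_closed[of P "1-q" m] assms by (simp add: field_simps)
  define pm where "pm = P^m"
  define ym where "ym = (1-q)^m"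
  have d: "P - (1-q) \<noteq> 0" "1 - P \<noteq> 0" "q \<noteq> 0" using assms by auto
  have r: "q*(1-P)*(((1-pm)/(1-P) - (1-ym)/q)/(P-(1-q))) = (q*(1-pm) - (1-P)*(1-ym))/(P-(1-q))"
  proof -
    have "(1-pm)/(1-P) - (1-ym)/q = (q*(1-pm) - (1-P)*(1-ym))/((1-P)*q)"
      using d by (simp add: diff_frac_eq algebra_simps)
    then show ?thesis using d by simp
  qed
  have l: "1 - (pm + (1-P)*(pm - ym)/(P-(1-q))) = ((1-pm)*(P-(1-q)) - (1-P)*(pm - ym))/(P-(1-q))"
    using d by (simp add: field_simps)
  have eq: "(1-pm)*(P-(1-q)) - (1-P)*(pm - ym) = q*(1-pm) - (1-P)*(1-ym)"
    by (simp add: algebra_simps)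
  have "1 - GG P (1-q) m = 1 - (pm + (1-P)*(pm - ym)/(P-(1-q)))" by (simp add: GG_def u pm_def ym_def)
  also have "\<dots> = (q*(1-pm) - (1-P)*(1-ym))/(P-(1-q))" using l eq by simp
  also have "\<dots> = q*(1-P)*(((1-pm)/(1-P) - (1-ym)/q)/(P-(1-q)))" by (rule r[symmetric])
  finally show ?thesis by (simp add: pm_def ym_def)
qed

lemma uu_nonneg: "0 \<le> x \<Longrightarrow> x \<le> 1 \<Longrightarrow> 0 \<le> y \<Longrightarrow> 0 \<le> uu x y t"
  by (induction t) auto

lemma GG_eventually:
  fixes x y \<alpha> :: real
  assumes "0 < x" "x < 1" "0 < y" "y < 1" "\<alpha> < 1"
  shows "\<exists>t. \<alpha> \<le> 1 - GG x y t"
proof -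
  define z where "z = max x y"
  have z: "0 < z" "z < 1" "x \<le> z" "y \<le> z" using assms by (auto simp: z_def)
  have ub: "uu x y t * z \<le> real t * z^t" for t
  proof (induction t)
    case (Suc t)
    have a: "(1-x)*x^t * z \<le> z^t * z"
    proof -
      have "(1-x)*x^t \<le> 1 * z^t" using assms z by (intro mult_mono power_mono) auto
      then show ?thesis using z by (simp add: mult_right_mono)
    qed
    have b: "y * (uu x y t * z) \<le> z * (real t * z^t)"
      by (rule mult_mono) (use Suc z assms uu_nonneg[of x y t] in auto)
    have "uu x y (Suc t) * z = (1-x)*x^t * z + y * (uu x y t * z)" by (simp add: algebra_simps)
    also have "\<dots> \<le> z^t * z + z * (real t * z^t)" using a b by linarith
    also have "\<dots> = real (Suc t) * z^(Suc t)" by (simp add: algebra_simps)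
    finally show ?case .
  qed simp
  have lim: "(\<lambda>n. of_nat n * z ^ n + z^n) \<longlonglongrightarrow> 0"
    using powser_times_n_limit_0[of z] LIMSEQ_power_zero[of z] z
    by (auto intro: tendsto_add_zero)
  have "(1 - \<alpha>) * z > 0" using assms z by simp
  from order_tendstoD(2)[OF lim this] obtain N where N: "\<And>n. n \<ge> N \<Longrightarrow> of_nat n * z ^ n + z^n < (1-\<alpha>)*z"
    unfolding eventually_sequentially by blast
  have "GG x y N * z = x^N * z + uu x y N * z" by (simp add: GG_def algebra_simps)
  also have "\<dots> \<le> z^N * z + real N * z^N"
  proof (rule add_mono)
    show "x^N * z \<le> z^N * z" using z assms by (intro mult_right_mono power_mono) auto
  qed (use ub[of N] in simp)
  also have "\<dots> \<le> of_nat N * z ^ N + z^N" using z by (simp add: mult_left_le_one_le)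
  also have "\<dots> < (1-\<alpha>)*z" using N by simp
  finally have "GG x y N < 1 - \<alpha>" using z by simp
  then show ?thesis by (intro exI[of _ N]) simp
qed



lemma pmf_map_bern:
  assumes "0 \<le> q" "q \<le> 1"
  shows "pmf (map_pmf g (bernoulli_pmf q)) z = (if g True = z then q else 0) + (if g False = z then 1-q else 0)"
  using assms by (simp add: map_pmf_def pmf_bind)

lemma bern0: "bernoulli_pmf 0 = return_pmf False"
  by (intro pmf_eqI) (auto simp: indicator_def)

lemma step_single:
  assumes "V - S = {v}"
  shows "wzf_step V E w S = map_pmf (\<lambda>b. if b then insert v S else S) (bernoulli_pmf (wzf_prob V E w S v))"
  unfolding wzf_step_def assms Pi_pmf_singleton map_pmf_comp
  by (intro map_pmf_cong) auto

lemma step_double: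
  assumes "V - S = {v,k}" "v \<noteq> k" "wzf_prob V E w S k = 0"
  shows "wzf_step V E w S = map_pmf (\<lambda>b. if b then insert v S else S) (bernoulli_pmf (wzf_prob V E w S v))"
proof -
  have "Pi_pmf {v,k} False (\<lambda>u. bernoulli_pmf (wzf_prob V E w S u)) =
     map_pmf (\<lambda>(y,f). f(v:=y)) (pair_pmf (bernoulli_pmf (wzf_prob V E w S v))
        (Pi_pmf {k} False (\<lambda>u. bernoulli_pmf (wzf_prob V E w S u))))"
    using assms by (subst Pi_pmf_insert) auto
  also have "Pi_pmf {k} False (\<lambda>u. bernoulli_pmf (wzf_prob V E w S u)) = return_pmf (\<lambda>_. False)"
    unfolding Pi_pmf_singleton assms(3) bern0 by (simp add: fun_eq_iff)
  finally have e: "Pi_pmf {v,k} False (\<lambda>u. bernoulli_pmf (wzf_prob V E w S u)) =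
     map_pmf (\<lambda>y. (\<lambda>_. False)(v:=y)) (bernoulli_pmf (wzf_prob V E w S v))"
    by (simp add: pair_return_pmf2 map_pmf_comp, auto intro!: map_pmf_cong simp: fun_eq_iff)
  show ?thesis
    unfolding wzf_step_def assms(1) e map_pmf_comp
    by (intro map_pmf_cong) auto
qed

lemma step_full: "wzf_step V E w V = return_pmf V"
  unfolding wzf_step_def by simp

lemma star_ptw:
  assumes pk: "\<forall>i\<in>{1..n}. 0 < p i \<and> p i < 1" and k: "k \<in> {1..n}"
  shows "ptw_le_prob (star_V n) (star_E n) (star_w p) ({1..n}-{k}) t
       = 1 - GG (\<Prod>u\<in>{1..n}-{k}. 1 - p u) (1 - p k) t"
proof -
  define V where "V = star_V n"
  define E where "E = star_E n"
  define w where "w = star_w p"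
  define B0 where "B0 = {1..n}-{k}"
  define B1 where "B1 = insert 0 B0"
  define x where "x = (\<Prod>u\<in>{1..n}-{k}. 1 - p u)"
  define y where "y = 1 - p k"
  have k1: "1 \<le> k" "k \<le> n" using k by auto
  have x01: "0 < x" unfolding x_def using pk
    by (auto intro!: prod_pos) 
  have x1: "x \<le> 1" unfolding x_def using pk
    by (intro prod_le_1) (auto, (metis One_nat_def atLeastAtMost_iff less_eq_real_def)+)
  have y01: "0 < y" "y < 1" using pk k by (auto simp: y_def)
  have VB0: "V - B0 = {0,k}" using k1 by (auto simp: V_def star_V_def B0_def)
  have VB1: "V - B1 = {k}" using k1 by (auto simp: V_def star_V_def B0_def B1_def)
  have insV: "insert k B1 = V" using k1 by (auto simp: V_def star_V_def B0_def B1_def)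
  have d01: "B0 \<noteq> B1" "B1 \<noteq> V" "B0 \<noteq> V" "B1 \<noteq> B0" "V \<noteq> B1" "V \<noteq> B0"
  proof -
    have "0 \<in> B1" "0 \<notin> B0" "k \<in> V" "k \<notin> B1" "0 \<in> V"
      using k1 by (auto simp: V_def star_V_def B0_def B1_def)
    then show "B0 \<noteq> B1" "B1 \<noteq> V" "B0 \<noteq> V" "B1 \<noteq> B0" "V \<noteq> B1" "V \<noteq> B0" by blast+
  qed
  have wh0: "{z\<in>V. E u z \<and> z \<notin> B0} = {0}" if "u \<in> B0" for u
    using that k1 by (auto simp: V_def star_V_def B0_def E_def star_E_def)
  have f00: "wzf_forcers V E B0 0 = B0" using wh0 by (auto simp: wzf_forcers_def)
  have f0k: "wzf_forcers V E B0 k = {}" using wh0 k1 by (auto simp: wzf_forcers_def)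
  have wh1: "{z\<in>V. E 0 z \<and> z \<notin> B1} = {k}"
    using k1 by (auto simp: V_def star_V_def B0_def B1_def E_def star_E_def)
  have wh1': "{z\<in>V. E u z \<and> z \<notin> B1} = {}" if "u \<in> B0" for u
    using that k1 by (auto simp: V_def star_V_def B0_def B1_def E_def star_E_def)
  have f1k: "wzf_forcers V E B1 k = {0}"
    using wh1 wh1' k1 unfolding wzf_forcers_def B1_def by auto
  have pr00: "wzf_prob V E w B0 0 = 1 - x"
    unfolding wzf_prob_def f00 by (simp add: x_def B0_def w_def star_w_def)
  have pr0k: "wzf_prob V E w B0 k = 0"
    unfolding wzf_prob_def f0k by simp
  have pr1k: "wzf_prob V E w B1 k = 1 - y"
    unfolding wzf_prob_def f1k y_def w_def star_w_def by simp
  have s0: "wzf_step V E w B0 = map_pmf (\<lambda>b. if b then B1 else B0) (bernoulli_pmf (1 - x))"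
    using step_double[OF VB0 _ pr0k] k1 pr00 unfolding B1_def by simp
  have s1: "wzf_step V E w B1 = map_pmf (\<lambda>b. if b then V else B1) (bernoulli_pmf (1 - y))"
    using step_single[OF VB1, of E w] pr1k unfolding insV by simp
  have s2: "wzf_step V E w V = return_pmf V" by (rule step_full)
  have p00: "pmf (wzf_step V E w B0) B0 = x" unfolding s0 using x01 x1 d01 by (simp add: pmf_map_bern)
  have p01: "pmf (wzf_step V E w B0) B1 = 1 - x" unfolding s0 using x01 x1 d01 by (simp add: pmf_map_bern)
  have p02: "pmf (wzf_step V E w B0) V = 0" unfolding s0 using x01 x1 d01 by (simp add: pmf_map_bern)
  have p10: "pmf (wzf_step V E w B1) B0 = 0" unfolding s1 using y01 d01 by (simp add: pmf_map_bern)
  have p11: "pmf (wzf_step V E w B1) B1 = y" unfolding s1 using y01 d01 by (simp add: pmf_map_bern)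
  have p12: "pmf (wzf_step V E w B1) V = 1 - y" unfolding s1 using y01 d01 by (simp add: pmf_map_bern)
  have p20: "pmf (wzf_step V E w V) B0 = 0" unfolding s2 using d01 by simp
  have p21: "pmf (wzf_step V E w V) B1 = 0" unfolding s2 using d01 by simp
  have p22: "pmf (wzf_step V E w V) V = 1" unfolding s2 by simp
  have st: "pmf (wzf_state V E w B0 t) B0 = x^t \<and> pmf (wzf_state V E w B0 t) B1 = uu x y t
      \<and> pmf (wzf_state V E w B0 t) V = 1 - x^t - uu x y t \<and> set_pmf (wzf_state V E w B0 t) \<subseteq> {B0,B1,V}"
  proof (induction t)
    case 0 then show ?case using d01 by simp
  next
    case (Suc t)
    let ?M = "wzf_state V E w B0 t"
    have sum: "pmf (wzf_state V E w B0 (Suc t)) z =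
       pmf (wzf_step V E w B0) z * pmf ?M B0 + pmf (wzf_step V E w B1) z * pmf ?M B1
       + pmf (wzf_step V E w V) z * pmf ?M V" for z
    proof -
      have "pmf (wzf_state V E w B0 (Suc t)) z = (\<Sum>a\<in>{B0,B1,V}. pmf (wzf_step V E w a) z * pmf ?M a)"
        unfolding wzf_state.simps pmf_bind
        by (rule integral_measure_pmf_real) (use Suc.IH in auto)
      then show ?thesis using d01 by (simp add: algebra_simps)
    qed
    have sets: "set_pmf (wzf_step V E w a) \<subseteq> {B0,B1,V}" if "a \<in> {B0,B1,V}" for a
      using that s0 s1 s2 by auto
    have "set_pmf (wzf_state V E w B0 (Suc t)) \<subseteq> {B0,B1,V}"
      unfolding wzf_state.simps set_bind_pmf using Suc.IH sets by blast
    moreover have "pmf (wzf_state V E w B0 (Suc t)) B0 = x^(Suc t)"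
      unfolding sum p00 p01 p02 p10 p11 p12 p20 p21 p22 using Suc.IH by simp
    moreover have "pmf (wzf_state V E w B0 (Suc t)) B1 = uu x y (Suc t)"
      unfolding sum p00 p01 p02 p10 p11 p12 p20 p21 p22 using Suc.IH by (simp add: algebra_simps)
    moreover have "pmf (wzf_state V E w B0 (Suc t)) V = 1 - x^(Suc t) - uu x y (Suc t)"
      unfolding sum p00 p01 p02 p10 p11 p12 p20 p21 p22 using Suc.IH by (simp add: algebra_simps)
    ultimately show ?case by blast
  qed
  show ?thesis using st unfolding ptw_le_prob_def GG_def
    by (simp add: V_def E_def w_def B0_def x_def y_def)
qed



lemma zf_white_leaves:
  assumes "zero_forcing_set (star_V n) (star_E n) B"
  shows "\<not> (\<exists>a b. a \<in> {1..n} - B \<and> b \<in> {1..n} - B \<and> a \<noteq> b)"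
proof
  assume "\<exists>a b. a \<in> {1..n} - B \<and> b \<in> {1..n} - B \<and> a \<noteq> b"
  then obtain a b where ab: "a \<in> {1..n} - B" "b \<in> {1..n} - B" "a \<noteq> b" by blast
  define W where "W = {1..n} - B"
  have inv: "(zf_step (star_V n) (star_E n) ^^ j) B \<inter> W = {}" for j
  proof (induction j)
    case 0 then show ?case by (auto simp: W_def)
  next
    case (Suc j)
    define S where "S = (zf_step (star_V n) (star_E n) ^^ j) B"
    have "zf_step (star_V n) (star_E n) S \<inter> W = {}"
    proof (rule ccontr)
      assume "zf_step (star_V n) (star_E n) S \<inter> W \<noteq> {}"
      then obtain v where v: "v \<in> zf_step (star_V n) (star_E n) S" "v \<in> W" by blast
      have "v \<notin> S" using Suc v(2) by (auto simp: S_def)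
      then obtain u where u: "u \<in> S" "{x\<in>star_V n. star_E n u x \<and> x \<notin> S} = {v}"
        using v(1) unfolding zf_step_def by blast
      have "v \<ge> 1" using v(2) by (auto simp: W_def)
      have "star_E n u v" using u(2) by blast
      then have "u = 0" using \<open>v \<ge> 1\<close> by (auto simp: star_E_def)
      have nS: "a \<notin> S" "b \<notin> S" using Suc ab by (auto simp: S_def W_def)
      have "a \<in> {x\<in>star_V n. star_E n u x \<and> x \<notin> S}" "b \<in> {x\<in>star_V n. star_E n u x \<and> x \<notin> S}"
        using ab nS \<open>u = 0\<close> by (auto simp: star_V_def star_E_def)
      then show False using u(2) ab(3) by auto
    qed
    then show ?case by (simp add: S_def)
  qed
  obtain j where "(zf_step (star_V n) (star_E n) ^^ j) B = star_V n"
    using assms unfolding zero_forcing_set_def by blast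
  with inv[of j] ab show False by (auto simp: W_def star_V_def)
qed

lemma zf_ok:
  assumes "n \<ge> 2" "k \<in> {1..n}"
  shows "zero_forcing_set (star_V n) (star_E n) ({1..n}-{k})"
proof -
  define V where "V = star_V n"
  define E where "E = star_E n"
  define B0 where "B0 = {1..n}-{k}"
  have k1: "1 \<le> k" "k \<le> n" using assms by auto
  obtain l where l: "l \<in> B0"
  proof (cases "k = 1")
    case True then show ?thesis using that[of 2] assms by (auto simp: B0_def)
  next
    case False then show ?thesis using that[of 1] assms by (auto simp: B0_def)
  qed
  have wh0: "{z\<in>V. E u z \<and> z \<notin> B0} = {0}" if "u \<in> B0" for u
    using that k1 by (auto simp: V_def star_V_def B0_def E_def star_E_def)
  have s1: "zf_step V E B0 = insert 0 B0"
  proof -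
    have "{v. \<exists>u\<in>B0. {x\<in>V. E u x \<and> x \<notin> B0} = {v}} = {0}"
      using wh0 l by auto
    then show ?thesis unfolding zf_step_def by auto
  qed
  have wh1: "{z\<in>V. E 0 z \<and> z \<notin> insert 0 B0} = {k}"
    using k1 by (auto simp: V_def star_V_def B0_def E_def star_E_def)
  have wh1': "{z\<in>V. E u z \<and> z \<notin> insert 0 B0} = {}" if "u \<in> B0" for u
    using that k1 by (auto simp: V_def star_V_def B0_def E_def star_E_def)
  have s2: "zf_step V E (insert 0 B0) = V"
  proof -
    have "{v. \<exists>u\<in>insert 0 B0. {x\<in>V. E u x \<and> x \<notin> insert 0 B0} = {v}} = {k}"
      using wh1 wh1' by auto
    then have "zf_step V E (insert 0 B0) = insert k (insert 0 B0)" unfolding zf_step_def by auto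
    also have "\<dots> = V" using k1 by (auto simp: V_def star_V_def B0_def)
    finally show ?thesis .
  qed
  have "(zf_step V E ^^ 2) B0 = V" using s1 s2 by (simp add: numeral_2_eq_2)
  moreover have "B0 \<subseteq> V" by (auto simp: B0_def V_def star_V_def)
  ultimately show ?thesis unfolding zero_forcing_set_def V_def E_def B0_def by blast
qed

lemma zf_card:
  assumes "n \<ge> 2" "zero_forcing_set (star_V n) (star_E n) B"
  shows "n - 1 \<le> card B" "card B = n - 1 \<Longrightarrow> \<exists>k\<in>{1..n}. B = {1..n}-{k}"
proof -
  have BV: "B \<subseteq> {0..n}" using assms by (auto simp: zero_forcing_set_def star_V_def)
  have W: "card ({1..n} - B) \<le> 1"
    using zf_white_leaves[OF assms(2)] by (subst One_nat_def, subst card_le_Suc0_iff_eq) (auto, blast)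
  have split: "card (B \<inter> {1..n}) + card ({1..n} - B) = n"
  proof -
    have "card ((B \<inter> {1..n}) \<union> ({1..n} - B)) = card (B \<inter> {1..n}) + card ({1..n} - B)"
      by (intro card_Un_disjoint) auto
    moreover have "(B \<inter> {1..n}) \<union> ({1..n} - B) = {1..n}" by auto
    ultimately show ?thesis by simp
  qed
  have fB: "finite B" using BV finite_subset by blast
  have c1: "card (B \<inter> {1..n}) \<le> card B" using fB by (intro card_mono) auto
  show "n - 1 \<le> card B" using W split c1 by linarith
  assume cB: "card B = n - 1"
  have "0 \<notin> B"
  proof
    assume "0 \<in> B"
    have "insert 0 (B \<inter> {1..n}) \<subseteq> B" using \<open>0 \<in> B\<close> by auto
    then have "card (insert 0 (B \<inter> {1..n})) \<le> card B" using fB by (intro card_mono) auto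
    moreover have "card (insert 0 (B \<inter> {1..n})) = Suc (card (B \<inter> {1..n}))" by simp
    ultimately show False using W split cB by linarith
  qed
  then have B1: "B \<subseteq> {1..n}" using BV by (metis Suc_leI atLeastAtMost_iff neq0_conv subset_iff One_nat_def)
  then have "B \<inter> {1..n} = B" by auto
  then have "card B + card ({1..n} - B) = n" using split by simp
  then have "card ({1..n} - B) = 1" using cB W assms(1) by linarith
  then obtain k where k: "{1..n} - B = {k}" using card_1_singletonE by blast
  then have "k \<in> {1..n}" by auto
  moreover have "B = {1..n} - {k}" using k B1 by auto
  ultimately show "\<exists>k\<in>{1..n}. B = {1..n}-{k}" by blast
qed

lemma zfn_star:
  assumes "n \<ge> 2"
  shows "zero_forcing_number (star_V n) (star_E n) = n - 1"
proof -
  let ?A = "{card B |B. zero_forcing_set (star_V n) (star_E n) B}"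
  have "?A \<subseteq> card ` Pow (star_V n)" by (auto simp: zero_forcing_set_def)
  then have fin: "finite ?A" by (rule finite_subset) (simp add: star_V_def)
  have "card ({1..n}-{1::nat}) = n - 1" using assms by simp
  then have mem: "n - 1 \<in> ?A" using zf_ok[OF assms, of 1] assms by force
  show ?thesis unfolding zero_forcing_number_def
    by (rule Min_eqI[OF fin]) (use zf_card(1)[OF assms] mem in auto)
qed



lemma prod_le_factor:
  fixes f :: "nat \<Rightarrow> real"
  assumes "finite A" "j \<in> A" "\<And>i. i \<in> A \<Longrightarrow> 0 \<le> f i \<and> f i \<le> 1"
  shows "prod f A \<le> f j"
proof -
  have "prod f A = f j * prod f (A - {j})" using assms by (simp add: prod.remove)
  also have "\<dots> \<le> f j * 1" using assms
    by (intro mult_left_mono prod_le_1) auto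
  finally show ?thesis by simp
qed

theorem mainTheorem8:
  fixes n :: nat and p :: "nat \<Rightarrow> real" and \<alpha> :: real
  assumes "n \<ge> 2"
    and "\<forall>i\<in>{1..n}. 0 < p i \<and> p i < 1"
    and "\<forall>i j. 1 \<le> i \<and> i \<le> j \<and> j \<le> n \<longrightarrow> p i \<le> p j"
    and "0 < \<alpha>" and "\<alpha> < 1"
    and "(\<Prod>j=1..n-1. 1 - p j) \<noteq> 1 - p n"
  shows "cptw (star_V n) (star_E n) (star_w p) \<alpha> =
    (let P = (\<Prod>j=1..n-1. 1 - p j) in
     LEAST m::nat. 0 < m \<and>
       p n * (1 - P) * (((1 - P ^ m) / (1 - P) - (1 - (1 - p n) ^ m) / p n) / (P - (1 - p n))) \<ge> \<alpha>)"
proof -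
  define Q where "Q k = (\<Prod>u\<in>{1..n}-{k}. 1 - p u)" for k
  define P where "P = (\<Prod>j=1..n-1. 1 - p j)"
  define L where "L k = cptw_set (star_V n) (star_E n) (star_w p) ({1..n}-{k}) \<alpha>" for k
  have pk: "\<forall>i\<in>{1..n}. 0 < p i \<and> p i < 1" using assms(2) .
  have fac: "\<And>i. i \<in> {1..n} \<Longrightarrow> 0 \<le> 1 - p i \<and> 1 - p i \<le> 1" using pk by fastforce
  have PQ: "P = Q n"
  proof -
    have "{1..n}-{n} = {1..n-1}" using assms(1) by auto
    then show ?thesis by (simp add: P_def Q_def)
  qed
  have Lk: "L k = (LEAST t. \<alpha> \<le> 1 - GG (Q k) (1 - p k) t)" if "k \<in> {1..n}" for k
    unfolding L_def cptw_set_def Q_def star_ptw[OF pk that] ..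
  have Qpos: "0 < Q k" for k unfolding Q_def using pk by (auto intro!: prod_pos)
  have Qlt: "Q k < 1" if "k \<in> {1..n}" for k
  proof -
    obtain j where j: "j \<in> {1..n}-{k}"
    proof (cases "k = 1")
      case True then show ?thesis using that[of 2] assms(1) by auto
    next
      case False then show ?thesis using that[of 1] assms(1) by auto
    qed
    have "Q k \<le> 1 - p j" unfolding Q_def by (rule prod_le_factor) (use j fac in auto)
    then show ?thesis using j pk by force
  qed
  have R: "Q k * (1 - p k) = (\<Prod>u\<in>{1..n}. 1 - p u)" if "k \<in> {1..n}" for k
    unfolding Q_def using that by (simp add: prod.remove mult.commute)
  have cmp: "GG (Q n) (1 - p n) t \<le> GG (Q k) (1 - p k) t" if k: "k \<in> {1..n}" for k t
  proof (cases "k = n")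
    case False
    have n1: "n \<in> {1..n}" using assms(1) by auto
    have eq: "Q k * (1 - p k) = Q n * (1 - p n)" using R[OF k] R[OF n1] by simp
    have pkn: "p k \<le> p n" using assms(3) k by auto
    have pn: "0 < p n" "p n < 1" using pk n1 by auto
    have pk1: "0 < p k" "p k < 1" using pk k by auto
    have Qkn: "Q k \<le> 1 - p n" unfolding Q_def
      by (rule prod_le_factor) (use k False fac n1 in auto)
    have QkQn: "Q k \<le> Q n"
    proof (rule ccontr)
      assume "\<not> Q k \<le> Q n"
      then have "Q n * (1 - p n) < Q k * (1 - p k)"
        using pkn pn Qpos[of n] by (intro mult_less_le_imp_less) auto
      then show False using eq by simp
    qed
    show ?thesis
    proof (cases "Q n \<le> 1 - p n")
      case True
      have "GG (1 - p n) (Q n) t \<le> GG (1 - p k) (Q k) t"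
        by (rule GG_mono) (use Qpos[of k] QkQn True pkn pk1 eq in \<open>auto simp: algebra_simps\<close>)
      then show ?thesis by (simp add: GG_sym[of "Q n"] GG_sym[of "Q k"])
    next
      case False
      have a: "Q n \<le> 1 - p k"
      proof (rule ccontr)
        assume "\<not> Q n \<le> 1 - p k"
        then have "Q k * (1 - p k) < (1 - p n) * Q n"
          using Qkn pk1 pn Qpos[of k] by (intro mult_le_less_imp_less) auto
        then show False using eq by (simp add: mult.commute)
      qed
      have "GG (Q n) (1 - p n) t \<le> GG (1 - p k) (Q k) t"
        by (rule GG_mono) (use Qpos[of k] Qkn False a pk1 eq in \<open>auto simp: algebra_simps\<close>)
      then show ?thesis by (simp add: GG_sym[of "Q k"])
    qed
  qed simp
  have ex: "\<exists>t. \<alpha> \<le> 1 - GG (Q k) (1 - p k) t" if "k \<in> {1..n}" for k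
    by (rule GG_eventually) (use Qpos[of k] Qlt[OF that] pk that assms(5) in auto)
  have n1: "n \<in> {1..n}" using assms(1) by auto
  have Lmin: "L n \<le> L k" if k: "k \<in> {1..n}" for k
  proof -
    have "\<alpha> \<le> 1 - GG (Q k) (1 - p k) (L k)" unfolding Lk[OF k] by (rule LeastI_ex[OF ex[OF k]])
    then have "\<alpha> \<le> 1 - GG (Q n) (1 - p n) (L k)" using cmp[OF k, of "L k"] by linarith
    then show ?thesis unfolding Lk[OF n1] by (rule Least_le)
  qed
  have setEq: "{cptw_set (star_V n) (star_E n) (star_w p) B \<alpha> |B. zero_forcing_set (star_V n) (star_E n) B
        \<and> card B = zero_forcing_number (star_V n) (star_E n)} = L ` {1..n}"
  proof -
    have "zero_forcing_set (star_V n) (star_E n) B \<and> card B = zero_forcing_number (star_V n) (star_E n)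
        \<longleftrightarrow> (\<exists>k\<in>{1..n}. B = {1..n}-{k})" for B
      using zf_card(2)[OF assms(1), of B] zf_ok[OF assms(1)] zfn_star[OF assms(1)] by auto
    then show ?thesis unfolding L_def by auto
  qed
  have cptwL: "cptw (star_V n) (star_E n) (star_w p) \<alpha> = L n"
    unfolding cptw_def setEq
    by (rule Min_eqI) (use Lmin n1 in auto)
  have pred: "(\<alpha> \<le> 1 - GG (Q n) (1 - p n) m) \<longleftrightarrow>
     (0 < m \<and> p n * (1 - P) * (((1 - P ^ m) / (1 - P) - (1 - (1 - p n) ^ m) / p n) / (P - (1 - p n))) \<ge> \<alpha>)" for m
  proof (cases "m = 0")
    case True then show ?thesis using assms(4) by (simp add: GG_def)
  next
    case False
    have "1 - GG P (1 - p n) m = p n*(1-P)*(((1-P^m)/(1-P) - (1-(1-p n)^m)/p n)/(P-(1-p n)))"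
      by (rule GG_formula) (use pk n1 Qlt[OF n1] PQ assms(6) P_def in auto)
    then show ?thesis using False PQ by simp
  qed
  show ?thesis unfolding cptwL Lk[OF n1] Let_def P_def[symmetric] pred ..
qed

end
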